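(* Let $X$ be a topological space in which every $\Lambda$-set is a $G_\delta$-set, and suppose that for each pair of disjoint $G_\delta$-sets $G_0,G_1$ in $X$ there exist $F_\sigma$-sets $F_0,F_1$ with $G_0\subseteq F_0$, $G_1\subseteq F_1$ and $F_0\cap F_1=\varnothing$. Let $g,f:X\to\mathbb{R}$ be functions such that $f$ is lower semi-Baire-one, $g$ is upper semi-Baire-one, and $g\le f$. Then there exists a Baire-one function $h:X\to\mathbb{R}$ such that $g\le h\le f$.
   Context: A $\Lambda$-set in $X$ is an intersection of open sets. A function $f:X\to\mathbb{R}$ is upper semi-Baire-one (resp. lower semi-Baire-one) if $f^{-1}(-\infty,t)$ (resp. $f^{-1}(t,+\infty)$) is an $F_\sigma$-set in $X$ for every real $t$. A function $h:X\to\mathbb{R}$ is Baire-one if the preimage of every open subset of $\mathbb{R}$ is an $F_\sigma$-set in $X$. $g\le f$ means $g(x)\le f(x)$ for all $x\in X$. *)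

theory Defs
  imports "HOL-Analysis.Analysis"
begin

text \<open>A Lambda-set: an intersection of (an arbitrary family of) open sets of X,
  taken inside the space (the empty intersection is the whole space).\<close>
definition lambda_set_in :: "'a topology \<Rightarrow> 'a set \<Rightarrow> bool" where
  "lambda_set_in X \<equiv> ((\<lambda>_. True) intersection_of openin X) relative_to topspace X"

definition upper_semi_baire_one :: "'a topology \<Rightarrow> ('a \<Rightarrow> real) \<Rightarrow> bool" where
  "upper_semi_baire_one X f \<longleftrightarrow> (\<forall>t::real. fsigma_in X {x \<in> topspace X. f x < t})"

definition lower_semi_baire_one :: "'a topology \<Rightarrow> ('a \<Rightarrow> real) \<Rightarrow> bool" where
  "lower_semi_baire_one X f \<longleftrightarrow> (\<forall>t::real. fsigma_in X {x \<in> topspace X. t < f x})"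

definition baire_one :: "'a topology \<Rightarrow> ('a \<Rightarrow> real) \<Rightarrow> bool" where
  "baire_one X h \<longleftrightarrow> (\<forall>U::real set. open U \<longrightarrow> fsigma_in X {x \<in> topspace X. h x \<in> U})"

end

theory Submission
  imports Defs
begin

definition downset_in :: "'a topology \<Rightarrow> 'a set \<Rightarrow> bool" where
  "downset_in X D \<longleftrightarrow> D \<subseteq> topspace X \<and> (\<forall>x\<in>D. \<forall>y. y \<in> X closure_of {x} \<longrightarrow> y \<in> D)"

lemma cl_self: "x \<in> topspace X \<Longrightarrow> x \<in> X closure_of {x}"
  using closure_of_subset[of "{x}" X] by simp

lemma cl_top: "y \<in> X closure_of {x} \<Longrightarrow> y \<in> topspace X"
  using closure_of_subset_topspace[of X "{x}"] by (rule subsetD)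

lemma cl_ne:
  assumes "y \<in> X closure_of {x}" shows "x \<in> topspace X"
proof (rule ccontr)
  assume "x \<notin> topspace X"
  then have "topspace X \<inter> {x} = {}" by blast
  then have "X closure_of {x} = {}" using closure_of_restrict[of X "{x}"] by simp
  then show False using assms by blast
qed

lemma fsigma_downset:
  assumes "fsigma_in X F" "x \<in> F" "y \<in> X closure_of {x}"
  shows "y \<in> F"
proof -
  obtain U where U: "countable U" "U \<subseteq> Collect (closedin X)" "\<Union>U = F"
    using assms(1) unfolding fsigma_in_def union_of_def by blast
  then obtain C where C: "C \<in> U" "x \<in> C" using assms(2) by blast
  then have "closedin X C" using U by blast
  then have "X closure_of {x} \<subseteq> C" using C by (simp add: closure_of_minimal)
  then show ?thesis using assms(3) U C by blast
qed

lemma downset_lambda: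
  assumes "downset_in X D"
  shows "lambda_set_in X (topspace X - D)"
proof -
  let ?U = "(\<lambda>z. topspace X - X closure_of {z}) ` D"
  have "topspace X \<inter> \<Inter>?U = topspace X - D"
  proof (intro equalityI subsetI)
    fix x assume x: "x \<in> topspace X \<inter> \<Inter>?U"
    show "x \<in> topspace X - D"
    proof (cases "x \<in> D")
      case True
      then have "x \<in> X closure_of {x}" using x by (simp add: cl_self)
      then show ?thesis using x True by blast
    qed (use x in auto)
  next
    fix x assume x: "x \<in> topspace X - D"
    then show "x \<in> topspace X \<inter> \<Inter>?U" using assms unfolding downset_in_def by blast
  qed
  moreover have "?U \<subseteq> Collect (openin X)" by auto
  ultimately show ?thesis unfolding lambda_set_in_def relative_to_def intersection_of_def
    by blast
qed

lemma downset_fsigma: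
  assumes lam: "\<And>S. lambda_set_in X S \<Longrightarrow> gdelta_in X S" and "downset_in X D"
  shows "fsigma_in X D"
proof -
  have "gdelta_in X (topspace X - D)" using lam downset_lambda assms(2) by blast
  moreover have "D \<subseteq> topspace X" using assms(2) unfolding downset_in_def by blast
  ultimately show ?thesis by (simp add: fsigma_in_gdelta_in double_diff)
qed

lemma cl_trans:
  assumes "y \<in> X closure_of {x}" "x \<in> X closure_of {z}"
  shows "y \<in> X closure_of {z}"
proof -
  have "X closure_of {x} \<subseteq> X closure_of {z}"
    using assms(2) by (simp add: closure_of_minimal)
  then show ?thesis using assms(1) by blast
qed


theorem corollary3:
  fixes X :: "'a topology" and f g :: "'a \<Rightarrow> real"
  assumes lam: "\<And>S. lambda_set_in X S \<Longrightarrow> gdelta_in X S"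
    and sep: "\<And>G0 G1. \<lbrakk>gdelta_in X G0; gdelta_in X G1; G0 \<inter> G1 = {}\<rbrakk> \<Longrightarrow>
        \<exists>F0 F1. fsigma_in X F0 \<and> fsigma_in X F1 \<and> G0 \<subseteq> F0 \<and> G1 \<subseteq> F1 \<and> F0 \<inter> F1 = {}"
    and f: "lower_semi_baire_one X f"
    and g: "upper_semi_baire_one X g"
    and gf: "\<forall>x\<in>topspace X. g x \<le> f x"
  shows "\<exists>h. baire_one X h \<and> (\<forall>x\<in>topspace X. g x \<le> h x \<and> h x \<le> f x)"
proof -
  define up where "up c = {e \<in> topspace X. c \<in> X closure_of {e}}" for c
  have up_gd: "gdelta_in X (up c)" for c
  proof -
    have "downset_in X (topspace X - up c)" unfolding downset_in_def
    proof (intro conjI ballI allI impI)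
      fix x y assume x: "x \<in> topspace X - up c" and y: "y \<in> X closure_of {x}"
      have "y \<in> topspace X" by (rule cl_top[OF y])
      moreover have "y \<notin> up c"
      proof
        assume "y \<in> up c"
        then have "c \<in> X closure_of {y}" unfolding up_def by blast
        then have "c \<in> X closure_of {x}" by (rule cl_trans[OF _ y])
        then show False using x \<open>x \<in> topspace X - up c\<close> unfolding up_def by blast
      qed
      ultimately show "y \<in> topspace X - up c" by blast
    qed blast
    then have "lambda_set_in X (topspace X - (topspace X - up c))" by (rule downset_lambda)
    moreover have "topspace X - (topspace X - up c) = up c" unfolding up_def by blast
    ultimately show ?thesis using lam by simp
  qed
  have dir: "\<exists>e. c1 \<in> X closure_of {e} \<and> c2 \<in> X closure_of {e}"
    if "y \<in> X closure_of {c1}" "y \<in> X closure_of {c2}" for y c1 c2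
  proof (rule ccontr)
    assume "\<not> ?thesis"
    then have "up c1 \<inter> up c2 = {}" unfolding up_def by blast
    then obtain F0 F1 where F: "fsigma_in X F0" "fsigma_in X F1" "up c1 \<subseteq> F0" "up c2 \<subseteq> F1"
      "F0 \<inter> F1 = {}" using sep[OF up_gd[of c1] up_gd[of c2]] by blast
    have "c1 \<in> topspace X" by (rule cl_ne[OF that(1)])
    have "c2 \<in> topspace X" by (rule cl_ne[OF that(2)])
    have "c1 \<in> up c1" "c2 \<in> up c2" unfolding up_def
      using \<open>c1 \<in> topspace X\<close> \<open>c2 \<in> topspace X\<close> cl_self by auto
    then have "c1 \<in> F0" "c2 \<in> F1" using F by blast+
    then have "y \<in> F0" "y \<in> F1" using fsigma_downset[OF F(1) _ that(1)] fsigma_downset[OF F(2) _ that(2)] by auto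
    then show False using F by blast
  qed
  have fmon: "f x \<le> f y" if "y \<in> X closure_of {x}" for x y
  proof (rule ccontr)
    assume "\<not> ?thesis"
    have x: "x \<in> topspace X" by (rule cl_ne[OF that])
    have fs: "fsigma_in X {x \<in> topspace X. f y < f x}" using f unfolding lower_semi_baire_one_def by blast
    have "x \<in> {x \<in> topspace X. f y < f x}" using x \<open>\<not> f x \<le> f y\<close> by simp
    then have "y \<in> {x \<in> topspace X. f y < f x}" by (rule fsigma_downset[OF fs _ that])
    then show False by simp
  qed
  have gmon: "g y \<le> g x" if "y \<in> X closure_of {x}" for x y
  proof (rule ccontr)
    assume "\<not> ?thesis"
    have x: "x \<in> topspace X" by (rule cl_ne[OF that])
    have fs: "fsigma_in X {x \<in> topspace X. g x < g y}" using g unfolding upper_semi_baire_one_def by blast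
    have "x \<in> {x \<in> topspace X. g x < g y}" using x \<open>\<not> g y \<le> g x\<close> by simp
    then have "y \<in> {x \<in> topspace X. g x < g y}" by (rule fsigma_downset[OF fs _ that])
    then show False by simp
  qed
  define R where "R x y \<longleftrightarrow> (\<exists>c. x \<in> X closure_of {c} \<and> y \<in> X closure_of {c})" for x y
  have Rsym: "R x y \<Longrightarrow> R y x" for x y unfolding R_def by blast
  have Rtrans: "R x y \<Longrightarrow> R y z \<Longrightarrow> R x z" for x y z
  proof -
    assume "R x y" "R y z"
    then obtain c d where "x \<in> X closure_of {c}" "y \<in> X closure_of {c}"
      "y \<in> X closure_of {d}" "z \<in> X closure_of {d}" unfolding R_def by blast
    then obtain e where e: "c \<in> X closure_of {e}" "d \<in> X closure_of {e}" using dir by blast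
    have "x \<in> X closure_of {e}" by (rule cl_trans[OF \<open>x \<in> X closure_of {c}\<close> e(1)])
    moreover have "z \<in> X closure_of {e}" by (rule cl_trans[OF \<open>z \<in> X closure_of {d}\<close> e(2)])
    ultimately show "R x z" unfolding R_def by blast
  qed
  have Rbound: "g y \<le> f x" if Rxy: "R x y" for x y
  proof -
    obtain c where c: "x \<in> X closure_of {c}" "y \<in> X closure_of {c}" using Rxy unfolding R_def by blast
    have "c \<in> topspace X" by (rule cl_ne[OF c(1)])
    then have "g c \<le> f c" using gf by blast
    moreover have "g y \<le> g c" by (rule gmon[OF c(2)])
    moreover have "f c \<le> f x" by (rule fmon[OF c(1)])
    ultimately show ?thesis by linarith
  qed
  have Rrefl: "R x x" if "x \<in> topspace X" for x unfolding R_def using cl_self[OF that] by blast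
  define h where "h x = Sup (g ` {y. R x y})" for x
  have hbd: "g x \<le> h x \<and> h x \<le> f x" if x: "x \<in> topspace X" for x
  proof
    have bdd: "bdd_above (g ` {y. R x y})"
      by (rule bdd_aboveI[where M="f x"]) (use Rbound in blast)
    have "g x \<in> g ` {y. R x y}" using Rrefl[OF x] by blast
    then show "g x \<le> h x" unfolding h_def using bdd by (rule cSup_upper)
    have ne: "g ` {y. R x y} \<noteq> {}" using Rrefl[OF x] by blast
    show "h x \<le> f x" unfolding h_def
      by (rule cSup_least[OF ne]) (use Rbound in blast)
  qed
  have hconst: "h y = h x" if "y \<in> X closure_of {x}" for x y
  proof -
    have "x \<in> topspace X" by (rule cl_ne[OF that])
    then have "x \<in> X closure_of {x}" by (rule cl_self)
    then have "R y x" using that unfolding R_def by blast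
    then have "R x y" by (rule Rsym)
    have "{z. R y z} = {z. R x z}"
    proof (intro equalityI subsetI)
      fix z assume "z \<in> {z. R y z}" then show "z \<in> {z. R x z}" using Rtrans[OF \<open>R x y\<close>] by blast
    next
      fix z assume "z \<in> {z. R x z}" then show "z \<in> {z. R y z}" using Rtrans[OF \<open>R y x\<close>] by blast
    qed
    then show ?thesis unfolding h_def by simp
  qed
  have "baire_one X h"
    unfolding baire_one_def
  proof (intro allI impI)
    fix U :: "real set"
    have "downset_in X {x \<in> topspace X. h x \<in> U}"
      unfolding downset_in_def
    proof (intro conjI ballI allI impI)
      fix x y assume x: "x \<in> {x \<in> topspace X. h x \<in> U}" and y: "y \<in> X closure_of {x}"
      have "h y = h x" using hconst[OF y] .
      then show "y \<in> {x \<in> topspace X. h x \<in> U}" using x cl_top[OF y] by simp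
    qed auto
    then show "fsigma_in X {x \<in> topspace X. h x \<in> U}" using downset_fsigma lam by blast
  qed
  then show ?thesis using hbd by blast
qed

end
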